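(* Let $d\in\mathbb N\cup\{\infty\}$, $C>0$, and let ${\boldsymbol\gamma}$ be POD weights with constants $a,C_a$. Put $c:=\sum_{w\in\mathcal U_d}(|w|!)^a\prod_{j\in w}(2^aC^2\gamma_j)\in[1,\infty]$. (1) If ${\boldsymbol\gamma}\in\mathcal S_{d,C}$, then ${\boldsymbol\eta}\le T^\uparrow_{d,C}{\boldsymbol\gamma}\le c\,{\boldsymbol\xi}$, where $\eta_u=C^{2|u|}\gamma_u$ and $\xi_u=C_a(|u|!)^a\prod_{j\in u}(2^aC^2\gamma_j)$. (2) If ${\boldsymbol\gamma}\in\mathcal M_d$, then $\mathbf 0\le T^\downarrow_{d,C}{\boldsymbol\gamma}\le{\boldsymbol\zeta}$, where $\zeta_u=C^{-2|u|}\gamma_u$.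
   Context: Write $[d]=\{1,\dots,d\}$ if $d\in\mathbb N$ and $[d]=\mathbb N$ if $d=\infty$; $[s]=\{1,\dots,s\}$. $\mathcal U_d$ is the set of finite subsets of $[d]$; weights are families $(\gamma_u)_{u\in\mathcal U_d}$ of non-negative reals ($\mathcal W_d$), compared componentwise; $\mathbf 0$ is the zero family. POD weights: $\gamma_u=\Gamma_{|u|}\prod_{j\in u}\gamma_j$ for a non-increasing sequence $(\gamma_j)_{j\in[d]}$ of non-negative reals and non-negative reals $(\Gamma_k)_{k\in[d]\cup\{0\}}$ with $\Gamma_k\le C_a(k!)^a$ for all $k$, for some constants $a,C_a>0$. $(\Delta_v{\boldsymbol\gamma})_u=\sum_{w\subseteq v}(-1)^{|w|}\gamma_{u\cup w}$; $\mathcal M_d$ is the set of weights with $\Delta_v{\boldsymbol\gamma}\ge\mathbf 0$ for all $v$. For $C>0$: $\mathcal S_{d,C}=\{{\boldsymbol\gamma}\in\mathcal W_d:\sum_vC^{2|v|}\gamma_v<\infty\}$; $(T^\uparrow_{d,C}{\boldsymbol\gamma})_u=\sum_{v\supseteq u}C^{2|v|}\gamma_v$ on $\mathcal S_{d,C}$; on $\mathcal M_d$, $(T^\downarrow_{d,C}{\boldsymbol\gamma})_u=C^{-2|u|}(\Delta_{[d]\setminus u}{\boldsymbol\gamma})_u$ if $d\in\mathbb N$ and $C^{-2|u|}\lim_{s\to\infty}(\Delta_{[s]\setminus u}{\boldsymbol\gamma})_u$ if $d=\infty$. *)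

theory Defs
  imports "HOL-Analysis.Analysis" "HOL-Library.Extended_Nat"
begin

definition idx :: "enat \<Rightarrow> nat set" where
  "idx d = {j. 1 \<le> j \<and> enat j \<le> d}"

definition U :: "enat \<Rightarrow> nat set set" where
  "U d = {u. finite u \<and> u \<subseteq> idx d}"

definition is_weight :: "enat \<Rightarrow> (nat set \<Rightarrow> real) \<Rightarrow> bool" where
  "is_weight d \<gamma> \<longleftrightarrow> (\<forall>u\<in>U d. 0 \<le> \<gamma> u)"

definition is_POD :: "enat \<Rightarrow> (nat set \<Rightarrow> real) \<Rightarrow> (nat \<Rightarrow> real) \<Rightarrow> (nat \<Rightarrow> real)
    \<Rightarrow> real \<Rightarrow> real \<Rightarrow> bool" where
  "is_POD d \<gamma> gs Gam a Ca \<longleftrightarrow>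
     0 < a \<and> 0 < Ca \<and>
     (\<forall>j\<in>idx d. 0 \<le> gs j) \<and>
     (\<forall>i\<in>idx d. \<forall>j\<in>idx d. i \<le> j \<longrightarrow> gs j \<le> gs i) \<and>
     (\<forall>k. enat k \<le> d \<longrightarrow> 0 \<le> Gam k \<and> Gam k \<le> Ca * (fact k) powr a) \<and>
     (\<forall>u\<in>U d. \<gamma> u = Gam (card u) * (\<Prod>j\<in>u. gs j))"

definition Delta :: "nat set \<Rightarrow> (nat set \<Rightarrow> real) \<Rightarrow> nat set \<Rightarrow> real" where
  "Delta v \<gamma> u = (\<Sum>w\<in>Pow v. (-1) ^ card w * \<gamma> (u \<union> w))"

definition in_M :: "enat \<Rightarrow> (nat set \<Rightarrow> real) \<Rightarrow> bool" where
  "in_M d \<gamma> \<longleftrightarrow> is_weight d \<gamma> \<and> (\<forall>v\<in>U d. \<forall>u\<in>U d. 0 \<le> Delta v \<gamma> u)"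

definition in_S :: "enat \<Rightarrow> real \<Rightarrow> (nat set \<Rightarrow> real) \<Rightarrow> bool" where
  "in_S d C \<gamma> \<longleftrightarrow> is_weight d \<gamma> \<and> (\<lambda>v. C ^ (2 * card v) * \<gamma> v) summable_on U d"

definition T_up :: "enat \<Rightarrow> real \<Rightarrow> (nat set \<Rightarrow> real) \<Rightarrow> nat set \<Rightarrow> real" where
  "T_up d C \<gamma> u = (\<Sum>\<^sub>\<infinity>v\<in>{v\<in>U d. u \<subseteq> v}. C ^ (2 * card v) * \<gamma> v)"

definition T_down :: "enat \<Rightarrow> real \<Rightarrow> (nat set \<Rightarrow> real) \<Rightarrow> nat set \<Rightarrow> real" where
  "T_down d C \<gamma> u =
     (if d = \<infinity> then lim (\<lambda>s. Delta ({1..s} - u) \<gamma> u) / C ^ (2 * card u)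
      else Delta (idx d - u) \<gamma> u / C ^ (2 * card u))"

end

theory Submission imports Defs begin

lemma Delta_empty: "Delta {} \<gamma> u = \<gamma> u"
  by (simp add: Delta_def)

lemma Delta_insert:
  assumes "finite v" "j \<notin> v"
  shows "Delta (insert j v) \<gamma> u = Delta v \<gamma> u - Delta v \<gamma> (insert j u)"
proof -
  have disj: "Pow v \<inter> insert j ` Pow v = {}" using assms by auto
  have inj: "inj_on (insert j) (Pow v)" using assms
    by (smt (verit, ccfv_SIG) PowD inj_onI insert_ident subset_iff)
  have "Delta (insert j v) \<gamma> u = (\<Sum>w\<in>Pow v. (-1) ^ card w * \<gamma> (u \<union> w))
      + (\<Sum>w\<in>insert j ` Pow v. (-1) ^ card w * \<gamma> (u \<union> w))"
    unfolding Delta_def Pow_insert using assms disj by (simp add: sum.union_disjoint)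
  also have "(\<Sum>w\<in>insert j ` Pow v. (-1) ^ card w * \<gamma> (u \<union> w))
      = (\<Sum>w\<in>Pow v. (-1) ^ card (insert j w) * \<gamma> (u \<union> insert j w))"
    using inj by (simp add: sum.reindex)
  also have "\<dots> = (\<Sum>w\<in>Pow v. - ((-1) ^ card w * \<gamma> (insert j u \<union> w)))"
  proof (rule sum.cong)
    fix w assume "w \<in> Pow v"
    then have "finite w" "j \<notin> w" using assms finite_subset by auto
    then show "(-1) ^ card (insert j w) * \<gamma> (u \<union> insert j w) = - ((-1) ^ card w * \<gamma> (insert j u \<union> w))"
      by simp
  qed simp
  finally show ?thesis by (simp add: Delta_def sum_negf)
qed

lemma Delta_mono_aux:
  assumes M: "in_M d \<gamma>" and u: "u \<in> U d" and fA: "finite A"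
  shows "finite v \<Longrightarrow> v \<union> A \<subseteq> idx d \<Longrightarrow> A \<inter> v = {} \<Longrightarrow> Delta (v \<union> A) \<gamma> u \<le> Delta v \<gamma> u"
  using fA
proof (induction A rule: finite_induct)
  case empty then show ?case by simp
next
  case (insert j A)
  have eq: "v \<union> insert j A = insert j (v \<union> A)" by auto
  have j: "j \<notin> v \<union> A" using insert by auto
  have "0 \<le> Delta (v \<union> A) \<gamma> (insert j u)"
    using M u insert.prems insert.hyps unfolding in_M_def U_def by auto
  then have "Delta (v \<union> insert j A) \<gamma> u \<le> Delta (v \<union> A) \<gamma> u"
    unfolding eq using Delta_insert[OF _ j] insert by simp
  also have "\<dots> \<le> Delta v \<gamma> u" using insert by auto
  finally show ?case .
qed

lemma Delta_mono:
  assumes M: "in_M d \<gamma>" and u: "u \<in> U d" and "v \<subseteq> v'" "finite v'" "v' \<subseteq> idx d"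
  shows "Delta v' \<gamma> u \<le> Delta v \<gamma> u"
proof -
  have "v' = v \<union> (v' - v)" using assms by auto
  then show ?thesis
    using Delta_mono_aux[OF M u, of "v' - v" v] assms finite_subset by (metis Diff_disjoint Int_commute finite_Diff)
qed

lemma Delta_le:
  assumes M: "in_M d \<gamma>" and u: "u \<in> U d" and "finite v'" "v' \<subseteq> idx d"
  shows "Delta v' \<gamma> u \<le> \<gamma> u"
  using Delta_mono[OF M u, of "{}" v'] assms by (simp add: Delta_empty)

lemma fact_split_nat: "fact (m + n) \<le> (2::nat) ^ (m + n) * fact m * fact n"
proof -
  have "fact (m + n) = fact m * fact n * ((m + n) choose m)"
    using binomial_fact_lemma[of m "m+n"] by simp
  also have "\<dots> \<le> fact m * fact n * 2 ^ (m + n)"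
    by (intro mult_left_mono binomial_le_pow2) simp
  finally show ?thesis by (simp add: mult_ac)
qed

lemma fact_split_powr:
  assumes "0 < (a::real)"
  shows "fact (m + n) powr a \<le> (2 powr a) ^ (m + n) * fact m powr a * fact n powr a"
proof -
  have "(fact (m + n) :: real) \<le> 2 ^ (m + n) * fact m * fact n"
    using fact_split_nat[of m n] by (metis (mono_tags, lifting) of_nat_fact of_nat_le_iff of_nat_mult of_nat_numeral of_nat_power)
  then have "fact (m + n) powr a \<le> (2 ^ (m + n) * fact m * fact n) powr a"
    using assms by (intro powr_mono2) auto
  also have "\<dots> = (2 ^ (m + n)) powr a * fact m powr a * fact n powr a"
    by (simp add: powr_mult)
  also have "(2 ^ (m + n) :: real) powr a = (2 powr a) ^ (m + n)"
    by (simp add: powr_realpow[symmetric] powr_powr mult.commute powr_power)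
  finally show ?thesis .
qed

lemma card_le_d: "v \<in> U d \<Longrightarrow> enat (card v) \<le> d"
proof (cases d)
  case (enat n)
  assume "v \<in> U d"
  then have "v \<subseteq> {1..n}" using enat unfolding U_def idx_def by auto
  then have "card v \<le> n" using card_mono[of "{1..n}" v] by simp
  then show ?thesis using enat by simp
qed simp

lemma pointwise:
  assumes C: "0 < C" and pod: "is_POD d \<gamma> gs Gam a Ca"
    and v: "v \<in> U d" and uv: "u \<subseteq> v"
  shows "C ^ (2 * card v) * \<gamma> v \<le>
     (Ca * fact (card u) powr a * (\<Prod>j\<in>u. 2 powr a * C\<^sup>2 * gs j)) *
     (fact (card (v - u)) powr a * (\<Prod>j\<in>v - u. 2 powr a * C\<^sup>2 * gs j))"
proof -
  from pod have a: "0 < a" and Ca: "0 < Ca" and gs: "\<And>j. j \<in> idx d \<Longrightarrow> 0 \<le> gs j"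
    and Gam: "\<And>k. enat k \<le> d \<Longrightarrow> Gam k \<le> Ca * fact k powr a"
    and gv: "\<gamma> v = Gam (card v) * (\<Prod>j\<in>v. gs j)"
    using v unfolding is_POD_def by auto
  have fv: "finite v" and vd: "v \<subseteq> idx d" using v unfolding U_def by auto
  have fu: "finite u" using fv uv finite_subset by auto
  have cv: "card v = card u + card (v - u)"
    using fv uv by (metis card_Diff_subset card_mono diff_add_inverse le_add_diff_inverse fu)
  have P0: "0 \<le> (\<Prod>j\<in>v. gs j)" using gs vd by (intro prod_nonneg) auto
  define K where "K = 2 powr a * C\<^sup>2"
  have "C ^ (2 * card v) * \<gamma> v \<le> C ^ (2 * card v) * (Ca * fact (card v) powr a * (\<Prod>j\<in>v. gs j))"
    unfolding gv using Gam[OF card_le_d[OF v]] P0 C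
    by (intro mult_left_mono mult_right_mono) auto
  also have "\<dots> \<le> C ^ (2 * card v) * (Ca * ((2 powr a) ^ card v * fact (card u) powr a * fact (card (v - u)) powr a) * (\<Prod>j\<in>v. gs j))"
    using fact_split_powr[OF a, of "card u" "card (v-u)"] cv P0 C Ca
    by (intro mult_left_mono mult_right_mono) auto
  also have "\<dots> = Ca * fact (card u) powr a * fact (card (v - u)) powr a * (K ^ card v * (\<Prod>j\<in>v. gs j))"
    unfolding K_def power_mult power_mult_distrib by (simp add: mult_ac)
  also have "K ^ card v * (\<Prod>j\<in>v. gs j) = (\<Prod>j\<in>v. K * gs j)"
    by (simp add: prod.distrib)
  also have "\<dots> = (\<Prod>j\<in>u. K * gs j) * (\<Prod>j\<in>v - u. K * gs j)"
    using prod.subset_diff[OF uv fv, of "\<lambda>j. K * gs j"] by (simp add: mult.commute)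
  finally show ?thesis unfolding K_def by (simp add: mult_ac)
qed

theorem mainTheorem9:
  fixes d :: enat and C a Ca :: real and \<gamma> :: "nat set \<Rightarrow> real"
    and gs Gam :: "nat \<Rightarrow> real" and c :: ennreal
  assumes C: "0 < C"
    and pod: "is_weight d \<gamma>" "is_POD d \<gamma> gs Gam a Ca"
    and c_def: "c = (\<Sum>\<^sub>\<infinity>w\<in>U d. ennreal (fact (card w) powr a * (\<Prod>j\<in>w. 2 powr a * C\<^sup>2 * gs j)))"
  shows "1 \<le> c \<and>
         (in_S d C \<gamma> \<longrightarrow> (\<forall>u\<in>U d.
           C ^ (2 * card u) * \<gamma> u \<le> T_up d C \<gamma> u \<and>
           ennreal (T_up d C \<gamma> u) \<le>
             c * ennreal (Ca * fact (card u) powr a * (\<Prod>j\<in>u. 2 powr a * C\<^sup>2 * gs j)))) \<and>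
         (in_M d \<gamma> \<longrightarrow> (\<forall>u\<in>U d.
           0 \<le> T_down d C \<gamma> u \<and> T_down d C \<gamma> u \<le> \<gamma> u / C ^ (2 * card u)))"
proof -
  define f where "f w = fact (card w) powr a * (\<Prod>j\<in>w. 2 powr a * C\<^sup>2 * gs j)" for w
  define \<xi> where "\<xi> u = Ca * fact (card u) powr a * (\<Prod>j\<in>u. 2 powr a * C\<^sup>2 * gs j)" for u
  from pod have a: "0 < a" and Ca: "0 < Ca" and gs: "\<And>j. j \<in> idx d \<Longrightarrow> 0 \<le> gs j"
    unfolding is_POD_def by auto
  have f0: "0 \<le> f w" if "w \<in> U d" for w
    using that gs C unfolding f_def U_def by (auto intro!: mult_nonneg_nonneg prod_nonneg)
  have xi0: "0 \<le> \<xi> w" if "w \<in> U d" for w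
    using that gs C Ca unfolding \<xi>_def U_def by (auto intro!: mult_nonneg_nonneg prod_nonneg)
  have c_SUP: "c = (SUP F\<in>{F. finite F \<and> F \<subseteq> U d}. sum (\<lambda>w. ennreal (f w)) F)"
    unfolding c_def f_def by (rule nonneg_infsum_complete) simp
  have sum_le_c: "ennreal (sum f G) \<le> c" if "finite G" "G \<subseteq> U d" for G
  proof -
    have "ennreal (sum f G) = sum (\<lambda>w. ennreal (f w)) G"
      using f0 that by (intro sum_ennreal[symmetric]) auto
    also have "\<dots> \<le> c" unfolding c_SUP using that by (intro SUP_upper) auto
    finally show ?thesis .
  qed
  have part0: "1 \<le> c"
  proof -
    have "{} \<in> U d" unfolding U_def by auto
    then have "ennreal (sum f {{}}) \<le> c" by (intro sum_le_c) auto
    then show ?thesis by (simp add: f_def)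
  qed
  have part1: "C ^ (2 * card u) * \<gamma> u \<le> T_up d C \<gamma> u \<and>
           ennreal (T_up d C \<gamma> u) \<le> c * ennreal (\<xi> u)" if S: "in_S d C \<gamma>" and u: "u \<in> U d" for u
  proof -
    define t where "t v = C ^ (2 * card v) * \<gamma> v" for v
    define Su where "Su = {v\<in>U d. u \<subseteq> v}"
    have t0: "0 \<le> t v" if "v \<in> U d" for v
      using pod(1) that C unfolding t_def is_weight_def by auto
    have summ: "t summable_on Su"
      using S unfolding in_S_def t_def Su_def by (auto intro: summable_on_subset)
    have T: "T_up d C \<gamma> u = infsum t Su" unfolding T_up_def t_def Su_def by simp
    have uS: "u \<in> Su" using u unfolding Su_def by auto
    have "infsum t {u} \<le> infsum t Su"
      by (rule infsum_mono2) (use summ uS t0 in \<open>auto simp: Su_def\<close>)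
    then have first: "C ^ (2 * card u) * \<gamma> u \<le> T_up d C \<gamma> u" unfolding T t_def by simp
    have "ennreal (infsum t Su) = (SUP F\<in>{F. finite F \<and> F \<subseteq> Su}. ennreal (sum t F))"
      by (rule infsum_nonneg_is_SUPREMUM_ennreal[OF summ]) (use t0 in \<open>auto simp: Su_def\<close>)
    also have "\<dots> \<le> c * ennreal (\<xi> u)"
    proof (rule SUP_least)
      fix F assume F: "F \<in> {F. finite F \<and> F \<subseteq> Su}"
      have inj: "inj_on (\<lambda>v. v - u) F"
        using F unfolding Su_def inj_on_def by blast
      have G: "finite ((\<lambda>v. v - u) ` F)" "(\<lambda>v. v - u) ` F \<subseteq> U d"
        using F unfolding Su_def U_def by auto
      have "sum t F \<le> sum (\<lambda>v. \<xi> u * f (v - u)) F"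
        using F pointwise[OF C pod(2)] unfolding Su_def t_def \<xi>_def f_def
        by (intro sum_mono) auto
      also have "\<dots> = \<xi> u * sum f ((\<lambda>v. v - u) ` F)"
        using inj by (simp add: sum.reindex sum_distrib_left)
      finally have le: "sum t F \<le> \<xi> u * sum f ((\<lambda>v. v - u) ` F)" .
      have "0 \<le> sum f ((\<lambda>v. v - u) ` F)" using G f0 by (intro sum_nonneg) auto
      then have eq: "ennreal (\<xi> u * sum f ((\<lambda>v. v - u) ` F)) = ennreal (\<xi> u) * ennreal (sum f ((\<lambda>v. v - u) ` F))"
        using xi0[OF u] by (simp add: ennreal_mult)
      have "ennreal (sum t F) \<le> ennreal (\<xi> u) * ennreal (sum f ((\<lambda>v. v - u) ` F))"
        using ennreal_leI[OF le] eq by simp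
      also have "\<dots> \<le> ennreal (\<xi> u) * c"
        by (intro mult_left_mono sum_le_c G) simp
      finally show "ennreal (sum t F) \<le> c * ennreal (\<xi> u)" by (simp add: mult.commute)
    qed
    finally show ?thesis using first T by simp
  qed
  have part2: "0 \<le> T_down d C \<gamma> u \<and> T_down d C \<gamma> u \<le> \<gamma> u / C ^ (2 * card u)"
    if M: "in_M d \<gamma>" and u: "u \<in> U d" for u
  proof -
    have Cp: "0 < C ^ (2 * card u)" using C by simp
    have "\<exists>L. 0 \<le> L \<and> L \<le> \<gamma> u \<and> T_down d C \<gamma> u = L / C ^ (2 * card u)"
    proof (cases "d = \<infinity>")
      case True
      define X where "X s = Delta ({1..s} - u) \<gamma> u" for s
      have sub: "{1..s} - u \<subseteq> idx d" for s using True unfolding idx_def by auto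
      have dec: "decseq X"
        unfolding decseq_def X_def
        by (intro allI impI Delta_mono[OF M u]) (use sub in auto)
      have X0: "0 \<le> X s" for s
        using M u sub[of s] unfolding in_M_def U_def X_def by auto
      obtain L where L: "X \<longlonglongrightarrow> L" "\<forall>i. L \<le> X i"
        using decseq_convergent[OF dec, of 0] X0 by blast
      have "0 \<le> L" using L(1) X0 by (intro LIMSEQ_le_const) auto
      moreover have "L \<le> \<gamma> u" using L(2)[rule_format, of 0] by (simp add: X_def Delta_empty)
      moreover have "T_down d C \<gamma> u = L / C ^ (2 * card u)"
        using True limI[OF L(1)] unfolding T_down_def X_def by simp
      ultimately show ?thesis by blast
    next
      case False
      then obtain n where n: "d = enat n" by auto
      have sub: "idx d - u \<subseteq> idx d" "finite (idx d - u)"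
        using n unfolding idx_def by (auto intro: finite_subset[of _ "{..n}"])
      have "0 \<le> Delta (idx d - u) \<gamma> u"
        using M u sub unfolding in_M_def U_def by auto
      moreover have "Delta (idx d - u) \<gamma> u \<le> \<gamma> u"
        using Delta_le[OF M u sub(2) sub(1)] .
      ultimately show ?thesis using False unfolding T_down_def by auto
    qed
    then obtain L where "0 \<le> L" "L \<le> \<gamma> u" "T_down d C \<gamma> u = L / C ^ (2 * card u)" by blast
    then show ?thesis using Cp by (simp add: divide_right_mono)
  qed
  show ?thesis using part0 part1 part2 unfolding \<xi>_def by blast
qed

end
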